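(* In the While-language extended with non-deterministic input, for every command $c$ and stores $\sigma,\sigma'$: if $(c,\sigma)\to^\infty$ then $(c,\sigma,\Downarrow)\Rightarrow^{co}_G\sigma',\Uparrow$.
   Context: Extended While-language syntax: variables $x$ range over a countably infinite set $\mathit{Var}$; $n$ ranges over natural numbers; values are $v ::= \mathsf{null}\mid n$ ($\mathsf{null}$ distinct from every natural number); expressions are $e ::= v\mid x\mid e_1\oplus e_2\mid\mathsf{input}$ with $\oplus\in\{+,-,*\}$, where $\oplus(n_1,n_2)$ is the result of the operation on naturals; commands are $c ::= \mathsf{skip}\mid\mathsf{alloc}\ x\mid x:=e\mid c_1;c_2\mid \mathsf{if}\ e\ c_1\ c_2\mid\mathsf{while}\ e\ c$. A store $\sigma$ is a finite partial map from $\mathit{Var}$ to values, with domain $\mathrm{dom}(\sigma)$, lookup $\sigma(x)$, update $\sigma[x\mapsto v]$. Expression evaluation $(e,\sigma)\Rightarrow_E v$ is the least relation with: $(v,\sigma)\Rightarrow_E v$; $(x,\sigma)\Rightarrow_E\sigma(x)$ if $x\in\mathrm{dom}(\sigma)$; if $(e_1,\sigma)\Rightarrow_E n_1$ and $(e_2,\sigma)\Rightarrow_E n_2$ with $n_1,n_2$ naturals then $(e_1\oplus e_2,\sigma)\Rightarrow_E\oplus(n_1,n_2)$; and $(\mathsf{input},\sigma)\Rightarrow_E v$ for every value $v$. Small-step relation $(c,\sigma)\to(c',\sigma')$ is the least relation with: $(\mathsf{alloc}\ x,\sigma)\to(\mathsf{skip},\sigma[x\mapsto\mathsf{null}])$ if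 $x\notin\mathrm{dom}(\sigma)$; $(x:=e,\sigma)\to(\mathsf{skip},\sigma[x\mapsto v])$ if $x\in\mathrm{dom}(\sigma)$ and $(e,\sigma)\Rightarrow_E v$; $(c_1;c_2,\sigma)\to(c_1';c_2,\sigma')$ if $(c_1,\sigma)\to(c_1',\sigma')$; $(\mathsf{skip};c_2,\sigma)\to(c_2,\sigma)$; $(\mathsf{if}\ e\ c_1\ c_2,\sigma)\to(c_1,\sigma)$ if $(e,\sigma)\Rightarrow_E v$, $v\neq 0$; $(\mathsf{if}\ e\ c_1\ c_2,\sigma)\to(c_2,\sigma)$ if $(e,\sigma)\Rightarrow_E 0$; $(\mathsf{while}\ e\ c,\sigma)\to(c;\mathsf{while}\ e\ c,\sigma)$ if $(e,\sigma)\Rightarrow_E v$, $v\neq0$; $(\mathsf{while}\ e\ c,\sigma)\to(\mathsf{skip},\sigma)$ if $(e,\sigma)\Rightarrow_E 0$. The predicate $(c,\sigma)\to^\infty$ is coinductively defined (greatest predicate) by: if $(c,\sigma)\to(c',\sigma')$ and $(c',\sigma')\to^\infty$ then $(c,\sigma)\to^\infty$. Flag-based big-step semantics: status flags $\delta ::= \Downarrow\mid\Uparrow$. Expression evaluation $(e,\sigma,\delta)\Rightarrow_{GE}v,\delta'$ is the least relation with: $(v,\sigma,\Downarrow)\Rightarrow_{GE}v,\Downarrow$; $(x,\sigma,\Downarrow)\Rightarrow_{GE}\sigma(x),\Downarrow$ if $x\in\mathrm{dom}(\sigma)$; if $(e_1,\sigma,\Downarrow)\Rightarrow_{GE}n_1,\delta$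 and $(e_2,\sigma,\delta)\Rightarrow_{GE}n_2,\delta'$ ($n_1,n_2$ naturals) then $(e_1\oplus e_2,\sigma,\Downarrow)\Rightarrow_{GE}\oplus(n_1,n_2),\delta'$; $(\mathsf{input},\sigma,\Downarrow)\Rightarrow_{GE}v,\Downarrow$ for every value $v$; and $(e,\sigma,\Uparrow)\Rightarrow_{GE}v,\Uparrow$ for every value $v$. The command rules for judgments $(c,\sigma,\delta)\Rightarrow_G\sigma',\delta'$ are: $(\mathsf{skip},\sigma,\Downarrow)\Rightarrow_G\sigma,\Downarrow$; $(\mathsf{alloc}\ x,\sigma,\Downarrow)\Rightarrow_G\sigma[x\mapsto\mathsf{null}],\Downarrow$ if $x\notin\mathrm{dom}(\sigma)$; $(x:=e,\sigma,\Downarrow)\Rightarrow_G\sigma[x\mapsto v],\delta$ if $x\in\mathrm{dom}(\sigma)$ and $(e,\sigma,\Downarrow)\Rightarrow_{GE}v,\delta$; $(c_1;c_2,\sigma,\Downarrow)\Rightarrow_G\sigma'',\delta'$ if $(c_1,\sigma,\Downarrow)\Rightarrow_G\sigma',\delta$ and $(c_2,\sigma',\delta)\Rightarrow_G\sigma'',\delta'$; $(\mathsf{if}\ e\ c_1\ c_2,\sigma,\Downarrow)\Rightarrow_G\sigma',\delta'$ if $v\ne0$, $(e,\sigma,\Downarrow)\Rightarrow_{GE}v,\delta$ and $(c_1,\sigma,\delta)\Rightarrow_G\sigma',\delta'$; $(\mathsf{if}\ e\ c_1\ c_2,\sigma,\Downarrow)\Rightarrow_G\sigma',\delta'$ if $(e,\sigma,\Downarrow)\Rightarrow_{GE}0,\delta$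 and $(c_2,\sigma,\delta)\Rightarrow_G\sigma',\delta'$; $(\mathsf{while}\ e\ c,\sigma,\Downarrow)\Rightarrow_G\sigma'',\delta''$ if $(e,\sigma,\Downarrow)\Rightarrow_{GE}v,\delta$, $v\ne0$, $(c,\sigma,\delta)\Rightarrow_G\sigma',\delta'$ and $(\mathsf{while}\ e\ c,\sigma',\delta')\Rightarrow_G\sigma'',\delta''$; $(\mathsf{while}\ e\ c,\sigma,\Downarrow)\Rightarrow_G\sigma,\delta$ if $(e,\sigma,\Downarrow)\Rightarrow_{GE}0,\delta$; $(c,\sigma,\Uparrow)\Rightarrow_G\sigma',\Uparrow$ for every store $\sigma'$. $\Rightarrow^{co}_G$ is the coinductive interpretation of these command rules (greatest relation such that every element is the conclusion of a rule instance whose command premises lie in it). *)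

theory Defs
  imports Main "HOL-Library.Finite_Map"
begin

type_synonym var = string

datatype val = Null | Num nat

datatype binop = Plus | Minus | Times

datatype expr = Val val | Var var | BinOp binop expr expr | Input

datatype com = Skip | Alloc var | Assign var expr | Seq com com
  | If expr com com | While expr com

type_synonym store = "(var, val) fmap"

fun apply_op :: "binop \<Rightarrow> nat \<Rightarrow> nat \<Rightarrow> nat" where
  "apply_op Plus a b = a + b"
| "apply_op Minus a b = a - b"
| "apply_op Times a b = a * b"

inductive eval_e :: "expr \<Rightarrow> store \<Rightarrow> val \<Rightarrow> bool" where
  "eval_e (Val v) \<sigma> v"
| "fmlookup \<sigma> x = Some v \<Longrightarrow> eval_e (Var x) \<sigma> v"
| "eval_e e1 \<sigma> (Num n1) \<Longrightarrow> eval_e e2 \<sigma> (Num n2) \<Longrightarrow>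
     eval_e (BinOp op e1 e2) \<sigma> (Num (apply_op op n1 n2))"
| "eval_e Input \<sigma> v"

inductive step :: "com \<Rightarrow> store \<Rightarrow> com \<Rightarrow> store \<Rightarrow> bool" where
  "x \<notin> fmdom' \<sigma> \<Longrightarrow> step (Alloc x) \<sigma> Skip (fmupd x Null \<sigma>)"
| "x \<in> fmdom' \<sigma> \<Longrightarrow> eval_e e \<sigma> v \<Longrightarrow> step (Assign x e) \<sigma> Skip (fmupd x v \<sigma>)"
| "step c1 \<sigma> c1' \<sigma>' \<Longrightarrow> step (Seq c1 c2) \<sigma> (Seq c1' c2) \<sigma>'"
| "step (Seq Skip c2) \<sigma> c2 \<sigma>"
| "eval_e e \<sigma> v \<Longrightarrow> v \<noteq> Num 0 \<Longrightarrow> step (If e c1 c2) \<sigma> c1 \<sigma>"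
| "eval_e e \<sigma> (Num 0) \<Longrightarrow> step (If e c1 c2) \<sigma> c2 \<sigma>"
| "eval_e e \<sigma> v \<Longrightarrow> v \<noteq> Num 0 \<Longrightarrow> step (While e c) \<sigma> (Seq c (While e c)) \<sigma>"
| "eval_e e \<sigma> (Num 0) \<Longrightarrow> step (While e c) \<sigma> Skip \<sigma>"

coinductive diverges :: "com \<Rightarrow> store \<Rightarrow> bool" where
  "step c \<sigma> c' \<sigma>' \<Longrightarrow> diverges c' \<sigma>' \<Longrightarrow> diverges c \<sigma>"

datatype flag = Conv | Div   (* Conv = \<Down>, Div = \<Up> *)

inductive eval_ge :: "expr \<Rightarrow> store \<Rightarrow> flag \<Rightarrow> val \<Rightarrow> flag \<Rightarrow> bool" where
  "eval_ge (Val v) \<sigma> Conv v Conv"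
| "fmlookup \<sigma> x = Some v \<Longrightarrow> eval_ge (Var x) \<sigma> Conv v Conv"
| "eval_ge e1 \<sigma> Conv (Num n1) \<delta> \<Longrightarrow> eval_ge e2 \<sigma> \<delta> (Num n2) \<delta>' \<Longrightarrow>
     eval_ge (BinOp op e1 e2) \<sigma> Conv (Num (apply_op op n1 n2)) \<delta>'"
| "eval_ge Input \<sigma> Conv v Conv"
| "eval_ge e \<sigma> Div v Div"

coinductive big_co :: "com \<Rightarrow> store \<Rightarrow> flag \<Rightarrow> store \<Rightarrow> flag \<Rightarrow> bool" where
  "big_co Skip \<sigma> Conv \<sigma> Conv"
| "x \<notin> fmdom' \<sigma> \<Longrightarrow> big_co (Alloc x) \<sigma> Conv (fmupd x Null \<sigma>) Conv"
| "x \<in> fmdom' \<sigma> \<Longrightarrow> eval_ge e \<sigma> Conv v \<delta> \<Longrightarrow> big_co (Assign x e) \<sigma> Conv (fmupd x v \<sigma>) \<delta>"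
| "big_co c1 \<sigma> Conv \<sigma>' \<delta> \<Longrightarrow> big_co c2 \<sigma>' \<delta> \<sigma>'' \<delta>' \<Longrightarrow> big_co (Seq c1 c2) \<sigma> Conv \<sigma>'' \<delta>'"
| "v \<noteq> Num 0 \<Longrightarrow> eval_ge e \<sigma> Conv v \<delta> \<Longrightarrow> big_co c1 \<sigma> \<delta> \<sigma>' \<delta>' \<Longrightarrow>
     big_co (If e c1 c2) \<sigma> Conv \<sigma>' \<delta>'"
| "eval_ge e \<sigma> Conv (Num 0) \<delta> \<Longrightarrow> big_co c2 \<sigma> \<delta> \<sigma>' \<delta>' \<Longrightarrow>
     big_co (If e c1 c2) \<sigma> Conv \<sigma>' \<delta>'"
| "eval_ge e \<sigma> Conv v \<delta> \<Longrightarrow> v \<noteq> Num 0 \<Longrightarrow> big_co c \<sigma> \<delta> \<sigma>' \<delta>' \<Longrightarrow>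
     big_co (While e c) \<sigma>' \<delta>' \<sigma>'' \<delta>'' \<Longrightarrow> big_co (While e c) \<sigma> Conv \<sigma>'' \<delta>''"
| "eval_ge e \<sigma> Conv (Num 0) \<delta> \<Longrightarrow> big_co (While e c) \<sigma> Conv \<sigma> \<delta>"
| "big_co c \<sigma> Div \<sigma>' Div"

end

theory Submission
  imports Defs
begin

lemma eval_e_ge: "eval_e e \<sigma> v \<Longrightarrow> eval_ge e \<sigma> Conv v Conv"
  by (induction rule: eval_e.induct) (auto intro: eval_ge.intros)

lemma no_div_conv: "big_co c \<sigma> Div \<sigma>' Conv \<Longrightarrow> False"
  by (cases rule: big_co.cases) auto

lemma step_back:
  "step c \<sigma> c' \<sigma>' \<Longrightarrow> big_co c' \<sigma>' Conv \<sigma>'' Conv \<Longrightarrow> big_co c \<sigma> Conv \<sigma>'' Conv"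
proof (induction arbitrary: \<sigma>'' rule: step.induct)
  case (1 x \<sigma>)
  then show ?case by (auto elim: big_co.cases intro: big_co.intros)
next
  case (2 x \<sigma> e v)
  from 2(3) have "\<sigma>'' = fmupd x v \<sigma>" by (auto elim: big_co.cases)
  then show ?case using 2 by (auto intro!: big_co.intros eval_e_ge)
next
  case (3 c1 \<sigma> c1' \<sigma>' c2)
  from 3(3) obtain \<sigma>m \<delta> where a: "big_co c1' \<sigma>' Conv \<sigma>m \<delta>" "big_co c2 \<sigma>m \<delta> \<sigma>'' Conv"
    by (auto elim: big_co.cases)
  have "\<delta> = Conv" using a(2) no_div_conv by (cases \<delta>) auto
  with a 3 show ?case by (auto intro: big_co.intros)
next
  case (4 c2 \<sigma>)
  then show ?case by (auto intro: big_co.intros)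
next
  case (5 e \<sigma> v c1 c2)
  then show ?case by (auto intro: big_co.intros eval_e_ge)
next
  case (6 e \<sigma> c1 c2)
  then show ?case by (auto intro: big_co.intros eval_e_ge)
next
  case (7 e \<sigma> v c)
  from 7(3) obtain \<sigma>m \<delta> where a: "big_co c \<sigma> Conv \<sigma>m \<delta>" "big_co (While e c) \<sigma>m \<delta> \<sigma>'' Conv"
    by (auto elim: big_co.cases)
  have "\<delta> = Conv" using a(2) no_div_conv by (cases \<delta>) auto
  with a 7 show ?case by (auto intro: big_co.intros eval_e_ge)
next
  case (8 e \<sigma> c)
  from 8(2) have "\<sigma>'' = \<sigma>" by (auto elim: big_co.cases)
  with 8 show ?case by (auto intro: big_co.intros eval_e_ge)
qed

definition stp where "stp = (\<lambda>(c,\<sigma>) (c',\<sigma>'). step c \<sigma> c' \<sigma>')"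

lemma star_big: "stp\<^sup>*\<^sup>* (c,\<sigma>) (Skip,\<sigma>1) \<Longrightarrow> big_co c \<sigma> Conv \<sigma>1 Conv"
proof (induction "(c,\<sigma>)" arbitrary: c \<sigma> rule: converse_rtranclp_induct)
  case base
  then show ?case by (auto intro: big_co.intros)
next
  case (step z)
  then show ?case by (cases z) (auto simp: stp_def intro: step_back)
qed

lemma skip_nodiv: "\<not> diverges Skip \<sigma>"
  by (auto elim: diverges.cases step.cases)

lemma seq_div:
  assumes "diverges (Seq c1 c2) \<sigma>" "\<not> diverges c1 \<sigma>"
  shows "\<exists>\<sigma>1. stp\<^sup>*\<^sup>* (c1,\<sigma>) (Skip,\<sigma>1) \<and> diverges c2 \<sigma>1"
proof (rule ccontr)
  assume H: "\<not> ?thesis"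
  have "diverges c1 \<sigma>"
    using assms(1) H
  proof (coinduction arbitrary: c1 \<sigma> rule: diverges.coinduct)
    case (diverges c1 \<sigma>)
    from diverges(1) obtain c' \<sigma>' where s: "step (Seq c1 c2) \<sigma> c' \<sigma>'" "diverges c' \<sigma>'"
      by (auto elim: diverges.cases)
    from s(1) have "(\<exists>c1'. step c1 \<sigma> c1' \<sigma>' \<and> c' = Seq c1' c2) \<or> (c1 = Skip \<and> c' = c2 \<and> \<sigma>' = \<sigma>)"
      by (auto elim: step.cases)
    then show ?case
    proof
      assume "\<exists>c1'. step c1 \<sigma> c1' \<sigma>' \<and> c' = Seq c1' c2"
      then obtain c1' where 1: "step c1 \<sigma> c1' \<sigma>'" "c' = Seq c1' c2" by blast
      have "\<not> (\<exists>\<sigma>1. stp\<^sup>*\<^sup>* (c1', \<sigma>') (Skip, \<sigma>1) \<and> diverges c2 \<sigma>1)"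
        using diverges(2) 1 by (auto simp: stp_def intro: converse_rtranclp_into_rtranclp)
      then show ?thesis using 1 s(2) by auto
    next
      assume "c1 = Skip \<and> c' = c2 \<and> \<sigma>' = \<sigma>"
      then show ?thesis using diverges(2) s(2) by auto
    qed
  qed
  with assms(2) show False by simp
qed

theorem lemma26:
  fixes c :: com and \<sigma> \<sigma>' :: store
  assumes "diverges c \<sigma>"
  shows "big_co c \<sigma> Conv \<sigma>' Div"
  using assms
proof (coinduction arbitrary: c \<sigma> rule: big_co.coinduct)
  case (big_co c \<sigma>)
  from big_co obtain c' \<sigma>1 where s: "step c \<sigma> c' \<sigma>1" "diverges c' \<sigma>1"
    by (auto elim: diverges.cases)
  show ?case
  proof (cases c)
    case Skip
    with s show ?thesis by (auto elim: step.cases)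
  next
    case (Alloc x)
    with s show ?thesis by (auto elim: step.cases simp: skip_nodiv)
  next
    case (Assign x e)
    with s show ?thesis by (auto elim: step.cases simp: skip_nodiv)
  next
    case (Seq c1 c2)
    show ?thesis
    proof (cases "diverges c1 \<sigma>")
      case True
      then show ?thesis using Seq by (auto intro: big_co.intros)
    next
      case False
      then obtain \<sigma>2 where "stp\<^sup>*\<^sup>* (c1,\<sigma>) (Skip,\<sigma>2)" "diverges c2 \<sigma>2"
        using seq_div big_co Seq by blast
      moreover have "big_co c1 \<sigma> Conv \<sigma>2 Conv" using star_big calculation(1) by blast
      ultimately show ?thesis using Seq by auto
    qed
  next
    case (If e c1 c2)
    from s(1) If have "(\<exists>v. eval_e e \<sigma> v \<and> v \<noteq> Num 0 \<and> c' = c1 \<and> \<sigma>1 = \<sigma>) \<or> (eval_e e \<sigma> (Num 0) \<and> c' = c2 \<and> \<sigma>1 = \<sigma>)"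
      by (auto elim: step.cases)
    then show ?thesis using If s(2) by (metis eval_e_ge)
  next
    case (While e c0)
    from s(1) While have "(\<exists>v. eval_e e \<sigma> v \<and> v \<noteq> Num 0 \<and> c' = Seq c0 (While e c0) \<and> \<sigma>1 = \<sigma>) \<or> (c' = Skip)"
      by (auto elim: step.cases)
    then show ?thesis
    proof
      assume "\<exists>v. eval_e e \<sigma> v \<and> v \<noteq> Num 0 \<and> c' = Seq c0 (While e c0) \<and> \<sigma>1 = \<sigma>"
      then obtain v where 7: "eval_e e \<sigma> v" "v \<noteq> Num 0" "c' = Seq c0 (While e c0)" "\<sigma>1 = \<sigma>" by blast
      show ?thesis
      proof (cases "diverges c0 \<sigma>")
        case True
        have ev: "eval_ge e \<sigma> Conv v Conv" using 7 While eval_e_ge by auto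
        have w: "big_co (While e c0) \<sigma>' Div \<sigma>' Div" by (rule big_co.intros)
        show ?thesis unfolding While using ev w True 7 While by blast
      next
        case False
        then obtain \<sigma>2 where "stp\<^sup>*\<^sup>* (c0,\<sigma>) (Skip,\<sigma>2)" "diverges (While e c0) \<sigma>2"
          using seq_div[of c0 "While e c0" \<sigma>] s(2) 7 While by auto
        moreover have ev: "eval_ge e \<sigma> Conv v Conv" using 7 While eval_e_ge by auto
        moreover have "big_co c0 \<sigma> Conv \<sigma>2 Conv" using star_big calculation(1) by blast
        ultimately show ?thesis unfolding While using 7 While by blast
      qed
    next
      assume "c' = Skip"
      then show ?thesis using s(2) skip_nodiv by auto
    qed
  qed
qed

end
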